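(* Let $\mathrm{PARITY}:\{0,1\}^n\rightarrow\{0,1\}$, $\mathrm{PARITY}(x)=\bigoplus_i x_i$. Then $UC(\mathrm{PARITY})=WUC(\mathrm{PARITY})=n$ and $UQ(\mathrm{PARITY})=WUQ(\mathrm{PARITY})=\lceil n/2\rceil$.
   Context: Query model: a classical randomized query algorithm adaptively queries input bits $x_i$ (each query costs one) and outputs a bit; a quantum query algorithm alternates input-independent unitaries with the oracle $O_x:|i,b,z\rangle\mapsto|i,b\oplus x_i,z\rangle$ and measures an output bit. $UQ(f)$ (resp. $UC(f)$) is the minimum number of queries of a quantum (resp. classical randomized) algorithm that on every input outputs $f(x)$ with probability strictly greater than $1/2$. For an algorithm whose minimum over inputs of the success probability is $p>1/2$, its bias is $\beta=p-1/2$ and its weakly unbounded cost is (number of queries) $+\log(1/(2\beta))$; $WUQ(f)$ (resp. $WUC(f)$) is the minimum weakly unbounded cost over quantum (resp. classical randomized) algorithms. $\log$ is base 2. *)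

theory Defs
  imports "HOL-Probability.Probability" "Jordan_Normal_Form.Schur_Decomposition"
begin

text \<open>Inputs in {0,1}^n are bool lists of length n (True = 1); outputs are bools (True = 1).\<close>

definition inputs :: "nat \<Rightarrow> bool list set" where
  "inputs n = {x. length x = n}"

definition parity :: "bool list \<Rightarrow> bool" where
  "parity x = odd (length (filter id x))"

text \<open>Deterministic decision trees: Node i l r queries x_i and continues in l if x_i = 0,
  in r if x_i = 1.  A randomized query algorithm is a probability distribution over
  deterministic decision trees (the random seed is chosen first, then the algorithm adapts).\<close>

datatype dtree = Leaf bool | Node nat dtree dtree

fun dt_eval :: "dtree \<Rightarrow> bool list \<Rightarrow> bool" where
  "dt_eval (Leaf b) x = b"
| "dt_eval (Node i l r) x = (if x ! i then dt_eval r x else dt_eval l x)"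

fun dt_queries :: "dtree \<Rightarrow> bool list \<Rightarrow> nat" where
  "dt_queries (Leaf b) x = 0"
| "dt_queries (Node i l r) x = Suc (if x ! i then dt_queries r x else dt_queries l x)"

fun dt_valid :: "nat \<Rightarrow> dtree \<Rightarrow> bool" where
  "dt_valid n (Leaf b) = True"
| "dt_valid n (Node i l r) = (i < n \<and> dt_valid n l \<and> dt_valid n r)"

definition classical_alg :: "nat \<Rightarrow> nat \<Rightarrow> dtree pmf \<Rightarrow> bool" where
  "classical_alg n T A \<longleftrightarrow>
     (\<forall>t\<in>set_pmf A. dt_valid n t \<and> (\<forall>x\<in>inputs n. dt_queries t x \<le> T))"

definition classical_succ :: "dtree pmf \<Rightarrow> (bool list \<Rightarrow> bool) \<Rightarrow> bool list \<Rightarrow> real" where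
  "classical_succ A f x = measure_pmf.prob A {t. dt_eval t x = f x}"

definition classical_bias :: "nat \<Rightarrow> dtree pmf \<Rightarrow> (bool list \<Rightarrow> bool) \<Rightarrow> real" where
  "classical_bias n A f = Min ((\<lambda>x. classical_succ A f x) ` inputs n) - 1/2"

definition UC :: "nat \<Rightarrow> (bool list \<Rightarrow> bool) \<Rightarrow> nat" where
  "UC n f = (LEAST T. \<exists>A. classical_alg n T A \<and> (\<forall>x\<in>inputs n. classical_succ A f x > 1/2))"

definition WUC :: "nat \<Rightarrow> (bool list \<Rightarrow> bool) \<Rightarrow> real" where
  "WUC n f = Inf {real T + log 2 (1 / (2 * classical_bias n A f)) | T A.
                   classical_alg n T A \<and> classical_bias n A f > 0}"

text \<open>State space C^(n * 2 * W): basis state |i,b,z> (i < n, b < 2, z < W) has index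
  i * (2 * W) + b * W + z.  The query operator O_x maps |i,b,z> to |i, b xor x_i, z>.\<close>

definition qdim :: "nat \<Rightarrow> nat \<Rightarrow> nat" where
  "qdim n W = n * (2 * W)"

definition qry_perm :: "nat \<Rightarrow> bool list \<Rightarrow> nat \<Rightarrow> nat" where
  "qry_perm W x c =
     (let i = c div (2 * W); b = (c mod (2 * W)) div W; z = c mod W;
          b' = (if x ! i then 1 - b else b)
      in i * (2 * W) + b' * W + z)"

definition query_op :: "nat \<Rightarrow> nat \<Rightarrow> bool list \<Rightarrow> complex mat" where
  "query_op n W x = mat (qdim n W) (qdim n W)
     (\<lambda>(r, c). if r = qry_perm W x c then 1 else 0)"

definition unitary_mat :: "nat \<Rightarrow> complex mat \<Rightarrow> bool" where
  "unitary_mat d U \<longleftrightarrow> U \<in> carrier_mat d d \<and> mat_adjoint U * U = 1\<^sub>m d"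

text \<open>After the first unitary U0, each further unitary is preceded by one query.\<close>
fun q_run :: "complex mat \<Rightarrow> complex mat list \<Rightarrow> complex vec \<Rightarrow> complex vec" where
  "q_run Ox [] v = v"
| "q_run Ox (U # Us) v = q_run Ox Us (U *\<^sub>v (Ox *\<^sub>v v))"

definition q_final :: "nat \<Rightarrow> nat \<Rightarrow> complex mat \<Rightarrow> complex mat list \<Rightarrow> bool list \<Rightarrow> complex vec" where
  "q_final n W U0 Us x = q_run (query_op n W x) Us (U0 *\<^sub>v unit_vec (qdim n W) 0)"

text \<open>The final state is measured in the computational basis; the algorithm outputs 1 iff the
  outcome lies in the accepting set Acc.\<close>
definition q_prob1 :: "nat \<Rightarrow> nat \<Rightarrow> complex mat \<Rightarrow> complex mat list \<Rightarrow> nat set \<Rightarrow> bool list \<Rightarrow> real" where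
  "q_prob1 n W U0 Us Acc x =
     (\<Sum>j\<in>Acc \<inter> {..<qdim n W}. (cmod (q_final n W U0 Us x $ j))\<^sup>2)"

definition quantum_alg :: "nat \<Rightarrow> nat \<Rightarrow> nat \<Rightarrow> complex mat \<Rightarrow> complex mat list \<Rightarrow> bool" where
  "quantum_alg n T W U0 Us \<longleftrightarrow>
     W \<ge> 1 \<and> length Us = T \<and> unitary_mat (qdim n W) U0 \<and> (\<forall>U\<in>set Us. unitary_mat (qdim n W) U)"

definition quantum_succ ::
  "nat \<Rightarrow> nat \<Rightarrow> complex mat \<Rightarrow> complex mat list \<Rightarrow> nat set \<Rightarrow> (bool list \<Rightarrow> bool) \<Rightarrow> bool list \<Rightarrow> real" where
  "quantum_succ n W U0 Us Acc f x =
     (if f x then q_prob1 n W U0 Us Acc x else 1 - q_prob1 n W U0 Us Acc x)"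

definition quantum_bias ::
  "nat \<Rightarrow> nat \<Rightarrow> complex mat \<Rightarrow> complex mat list \<Rightarrow> nat set \<Rightarrow> (bool list \<Rightarrow> bool) \<Rightarrow> real" where
  "quantum_bias n W U0 Us Acc f = Min ((\<lambda>x. quantum_succ n W U0 Us Acc f x) ` inputs n) - 1/2"

definition UQ :: "nat \<Rightarrow> (bool list \<Rightarrow> bool) \<Rightarrow> nat" where
  "UQ n f = (LEAST T. \<exists>W U0 Us Acc. quantum_alg n T W U0 Us \<and>
                         (\<forall>x\<in>inputs n. quantum_succ n W U0 Us Acc f x > 1/2))"

definition WUQ :: "nat \<Rightarrow> (bool list \<Rightarrow> bool) \<Rightarrow> real" where
  "WUQ n f = Inf {real T + log 2 (1 / (2 * quantum_bias n W U0 Us Acc f)) | T W U0 Us Acc.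
                   quantum_alg n T W U0 Us \<and> quantum_bias n W U0 Us Acc f > 0}"

end

theory Submission
  imports Defs
begin

no_notation vec_nth (infixl \<open>$\<close> 90)


lemma adj_carrier: "M \<in> carrier_mat d d \<Longrightarrow> mat_adjoint M \<in> carrier_mat d d"
  unfolding mat_adjoint_def by auto

lemma adj_index: "M \<in> carrier_mat d d \<Longrightarrow> i < d \<Longrightarrow> j < d \<Longrightarrow>
   mat_adjoint M $$ (i,j) = cnj (M $$ (j,i))"
  unfolding mat_adjoint_def by (auto simp: mat_of_rows_index)

lemma mat_eq_by_vec:
  fixes A B :: "complex mat"
  assumes "A \<in> carrier_mat d d" "B \<in> carrier_mat d d"
    "\<And>v. v \<in> carrier_vec d \<Longrightarrow> A *\<^sub>v v = B *\<^sub>v v"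
  shows "A = B"
proof (rule eq_matI)
  fix i j assume i: "i < dim_row B" and j: "j < dim_col B"
  have dA: "dim_row A = d" "dim_col A = d" and dB: "dim_row B = d" "dim_col B = d" using assms(1,2) by auto
  have "A *\<^sub>v unit_vec d j = B *\<^sub>v unit_vec d j" using assms(3) by simp
  hence "(A *\<^sub>v unit_vec d j) $ i = (B *\<^sub>v unit_vec d j) $ i" by simp
  moreover have "(A *\<^sub>v unit_vec d j) $ i = A $$ (i,j)"
    using i j dA dB by (simp add: index_row(1))
  moreover have "(B *\<^sub>v unit_vec d j) $ i = B $$ (i,j)"
    using i j dA dB by (simp add: index_row(1))
  ultimately show "A $$ (i, j) = B $$ (i, j)" by simp
qed (use assms in auto)

lemma unitary_sym:
  assumes M: "M \<in> carrier_mat d d"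
    and sym: "\<And>i j. i < d \<Longrightarrow> j < d \<Longrightarrow> cnj (M $$ (j,i)) = M $$ (i,j)"
    and inv: "\<And>v. v \<in> carrier_vec d \<Longrightarrow> M *\<^sub>v (M *\<^sub>v v) = v"
  shows "unitary_mat d M"
proof -
  have adj: "mat_adjoint M = M"
    by (rule eq_matI) (use M adj_carrier[OF M] adj_index[OF M] sym in auto)
  have "M * M = 1\<^sub>m d"
    by (rule mat_eq_by_vec[of _ d]) (use M inv in auto)
  thus ?thesis unfolding unitary_mat_def adj using M by auto
qed

lemma adjoint_mult:
  assumes A: "A \<in> carrier_mat d d" and B: "B \<in> carrier_mat d d"
  shows "mat_adjoint (A * B) = mat_adjoint B * mat_adjoint (A :: complex mat)"
proof (rule eq_matI)
  have AB: "A * B \<in> carrier_mat d d" using A B by auto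
  show "dim_row (mat_adjoint (A * B)) = dim_row (mat_adjoint B * mat_adjoint A)"
    "dim_col (mat_adjoint (A * B)) = dim_col (mat_adjoint B * mat_adjoint A)"
    using adj_carrier[OF AB] adj_carrier[OF A] adj_carrier[OF B] by auto
  fix i j assume "i < dim_row (mat_adjoint B * mat_adjoint A)" "j < dim_col (mat_adjoint B * mat_adjoint A)"
  hence i: "i < d" and j: "j < d" using adj_carrier[OF A] adj_carrier[OF B] by auto
  have "mat_adjoint (A * B) $$ (i, j) = cnj ((A * B) $$ (j, i))" using adj_index[OF AB i j] .
  also have "\<dots> = cnj (\<Sum>k<d. A $$ (j,k) * B $$ (k,i))"
    using A B i j by (simp add: scalar_prod_def lessThan_atLeast0)
  also have "\<dots> = (\<Sum>k<d. cnj (B $$ (k,i)) * cnj (A $$ (j,k)))"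
    by (simp add: mult.commute)
  also have "\<dots> = (mat_adjoint B * mat_adjoint A) $$ (i, j)"
    using adj_carrier[OF A] adj_carrier[OF B] i j
    by (simp add: scalar_prod_def lessThan_atLeast0 adj_index[OF A] adj_index[OF B])
  finally show "mat_adjoint (A * B) $$ (i, j) = (mat_adjoint B * mat_adjoint A) $$ (i, j)" .
qed

lemma unitary_mult:
  assumes "unitary_mat d A" "unitary_mat d B"
  shows "unitary_mat d (A * B)"
proof -
  have A: "A \<in> carrier_mat d d" and B: "B \<in> carrier_mat d d"
    and a: "mat_adjoint A * A = 1\<^sub>m d" and b: "mat_adjoint B * B = 1\<^sub>m d"
    using assms unfolding unitary_mat_def by auto
  have A': "mat_adjoint A \<in> carrier_mat d d" and B': "mat_adjoint B \<in> carrier_mat d d"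
    using A B adj_carrier by auto
  have "mat_adjoint (A * B) * (A * B) = mat_adjoint B * (mat_adjoint A * A) * B"
    using A B A' B' by (simp add: adjoint_mult assoc_mult_mat[of _ d d _ d _ d])
  also have "\<dots> = 1\<^sub>m d" using a b B B' by simp
  finally show ?thesis unfolding unitary_mat_def using A B by auto
qed


definition cnt :: "bool list \<Rightarrow> nat" where "cnt x = length (filter id x)"

lemma cnt_update:
  "j < length x \<Longrightarrow> int (cnt (x[j := v])) = int (cnt x) - (if x!j then 1 else 0) + (if v then 1 else 0)"
proof (induction x arbitrary: j)
  case Nil then show ?case by simp
next
  case (Cons a x)
  show ?case
  proof (cases j)
    case 0 then show ?thesis by (auto simp: cnt_def)
  next
    case (Suc k)
    then have "k < length x" using Cons.prems by simp
    from Cons.IH[OF this] Suc show ?thesis by (auto simp: cnt_def)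
  qed
qed

definition flip :: "nat \<Rightarrow> bool list \<Rightarrow> bool list" where
  "flip j x = x[j := \<not> x!j]"

lemma flip_flip[simp]: "flip j (flip j x) = x"
  unfolding flip_def by (cases "j < length x") (auto simp: list_update_beyond)

lemma length_flip[simp]: "length (flip j x) = length x"
  unfolding flip_def by simp

lemma flip_nth: "flip j x ! i = (if i = j \<and> j < length x then \<not> x!i else x!i)"
  unfolding flip_def by (auto simp: nth_list_update list_update_beyond)

lemma cnt_flip: "j < length x \<Longrightarrow> odd (cnt (flip j x)) = even (cnt x)"
proof -
  assume j: "j < length x"
  have "int (cnt (flip j x)) = int (cnt x) - (if x!j then 1 else 0) + (if \<not> x!j then 1 else 0)"
    using cnt_update[OF j] unfolding flip_def .
  hence "int (cnt (flip j x)) = int (cnt x) + (if x!j then -1 else 1)" by auto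
  thus ?thesis by (cases "x!j") (auto simp flip: even_of_nat_iff, presburger+)
qed

lemma parity_cnt: "parity x = odd (cnt x)" unfolding parity_def cnt_def by simp

lemma parity_flip: "j < length x \<Longrightarrow> parity (flip j x) = (\<not> parity x)"
  using cnt_flip parity_cnt by auto

lemma inputs_flip: "x \<in> inputs n \<Longrightarrow> flip j x \<in> inputs n"
  unfolding inputs_def by simp

lemma finite_inputs[simp]: "finite (inputs n)"
  unfolding inputs_def using finite_lists_length_eq[of "UNIV :: bool set" n] by simp

lemma card_inputs: "card (inputs n) = 2 ^ n"
  unfolding inputs_def using card_lists_length_eq[of "UNIV :: bool set" n] by (simp add: card_UNIV_bool)

lemma replicate_inputs: "replicate n False \<in> inputs n"
  unfolding inputs_def by simp

fun qs :: "dtree \<Rightarrow> bool list \<Rightarrow> nat set" where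
  "qs (Leaf b) x = {}"
| "qs (Node i l r) x = insert i (if x ! i then qs r x else qs l x)"

lemma qs_finite: "finite (qs t x)"
  by (induction t) auto

lemma qs_card: "card (qs t x) \<le> dt_queries t x"
proof (induction t)
  case (Node i l r)
  have "card (qs (Node i l r) x) \<le> Suc (card (if x ! i then qs r x else qs l x))"
    by (simp add: card_insert_le_m1 qs_finite card_insert_if)
  also have "\<dots> \<le> dt_queries (Node i l r) x" using Node by auto
  finally show ?case .
qed simp

lemma qs_valid: "dt_valid n t \<Longrightarrow> qs t x \<subseteq> {..<n}"
  by (induction t) auto

lemma qs_agree: "(\<forall>i\<in>qs t x. y ! i = x ! i) \<Longrightarrow> qs t y = qs t x \<and> dt_eval t y = dt_eval t x"
  by (induction t) auto

lemma tree_half: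
  assumes valid: "dt_valid n t" and q: "\<forall>x\<in>inputs n. dt_queries t x < n"
  shows "2 * card {x \<in> inputs n. dt_eval t x = parity x} = 2 ^ n"
proof -
  define J where "J x = (LEAST j. j < n \<and> j \<notin> qs t x)" for x
  define \<phi> where "\<phi> x = flip (J x) x" for x
  have J: "J x < n \<and> J x \<notin> qs t x" if x: "x \<in> inputs n" for x
  proof -
    have "\<not> {..<n} \<subseteq> qs t x"
    proof
      assume "{..<n} \<subseteq> qs t x"
      hence "card {..<n} \<le> card (qs t x)" by (rule card_mono[OF qs_finite])
      hence "n \<le> dt_queries t x" using qs_card[of t x] by simp
      thus False using q x by auto
    qed
    then obtain j where "j < n \<and> j \<notin> qs t x" by blast
    thus ?thesis unfolding J_def by (rule LeastI[where P="\<lambda>j. j < n \<and> j \<notin> qs t x"])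
  qed
  have props: "\<phi> x \<in> inputs n \<and> \<phi> (\<phi> x) = x \<and> dt_eval t (\<phi> x) = dt_eval t x \<and> parity (\<phi> x) = (\<not> parity x)"
    if x: "x \<in> inputs n" for x
  proof -
    have len: "length x = n" using x unfolding inputs_def by simp
    have agree: "\<forall>i\<in>qs t x. \<phi> x ! i = x ! i"
      using J[OF x] unfolding \<phi>_def by (auto simp: flip_nth)
    from qs_agree[OF agree] have qq: "qs t (\<phi> x) = qs t x" and ev: "dt_eval t (\<phi> x) = dt_eval t x" by auto
    have "J (\<phi> x) = J x" unfolding J_def qq ..
    hence "\<phi> (\<phi> x) = x" unfolding \<phi>_def by simp
    moreover have "parity (\<phi> x) = (\<not> parity x)" unfolding \<phi>_def
      using parity_flip J[OF x] len by auto
    ultimately show ?thesis using ev inputs_flip[OF x] unfolding \<phi>_def by auto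
  qed
  define Gd where "Gd = {x \<in> inputs n. dt_eval t x = parity x}"
  define Bd where "Bd = {x \<in> inputs n. dt_eval t x \<noteq> parity x}"
  have inj: "inj_on \<phi> (inputs n)"
  proof (rule inj_onI)
    fix a b assume a: "a \<in> inputs n" and b: "b \<in> inputs n" and e: "\<phi> a = \<phi> b"
    have "\<phi> (\<phi> a) = a" using props[OF a] by blast
    moreover have "\<phi> (\<phi> b) = b" using props[OF b] by blast
    ultimately show "a = b" using e by metis
  qed
  have im1: "\<phi> ` Gd \<subseteq> Bd"
  proof
    fix y assume "y \<in> \<phi> ` Gd"
    then obtain x where x: "x \<in> Gd" "y = \<phi> x" by blast
    then have "x \<in> inputs n" unfolding Gd_def by simp
    from props[OF this] x show "y \<in> Bd" unfolding Gd_def Bd_def by blast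
  qed
  have im2: "\<phi> ` Bd \<subseteq> Gd"
  proof
    fix y assume "y \<in> \<phi> ` Bd"
    then obtain x where x: "x \<in> Bd" "y = \<phi> x" by blast
    then have "x \<in> inputs n" unfolding Bd_def by simp
    from props[OF this] x show "y \<in> Gd" unfolding Gd_def Bd_def by blast
  qed
  have s1: "Gd \<subseteq> inputs n" "Bd \<subseteq> inputs n" unfolding Gd_def Bd_def by auto
  have f1: "finite Gd" "finite Bd" using finite_subset[OF s1(1)] finite_subset[OF s1(2)] by auto
  have c1: "card Gd \<le> card Bd"
    by (rule card_inj_on_le[OF inj_on_subset[OF inj s1(1)] im1 f1(2)])
  have c2: "card Bd \<le> card Gd"
    by (rule card_inj_on_le[OF inj_on_subset[OF inj s1(2)] im2 f1(1)])
  have "card Gd + card Bd = card (inputs n)"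
  proof -
    have "Gd \<union> Bd = inputs n" "Gd \<inter> Bd = {}" unfolding Gd_def Bd_def by auto
    thus ?thesis using card_Un_disjoint[OF f1] by simp
  qed
  thus ?thesis using c1 c2 unfolding Gd_def card_inputs by linarith
qed


lemma sum_ind_card: "finite I \<Longrightarrow> (\<Sum>x\<in>I. (indicator {t. P t x} t :: real)) = real (card {x \<in> I. P t x})"
  by (simp add: indicator_def sum.If_cases Int_def)

lemma classical_sum:
  assumes alg: "classical_alg n T A" and T: "T < n"
  shows "(\<Sum>x\<in>inputs n. classical_succ A parity x) = 2 ^ n / 2"
proof -
  have "(\<Sum>x\<in>inputs n. classical_succ A parity x)
      = (\<Sum>x\<in>inputs n. \<integral>t. indicator {t. dt_eval t x = parity x} t \<partial>measure_pmf A)"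
    by (simp add: classical_succ_def)
  also have "\<dots> = \<integral>t. (\<Sum>x\<in>inputs n. indicator {t. dt_eval t x = parity x} t) \<partial>measure_pmf A"
    by (rule sym, rule Bochner_Integration.integral_sum[where I="inputs n" and M="measure_pmf A" and f="\<lambda>x t. indicator {t. dt_eval t x = parity x} t :: real"])
      (auto intro!: integrable_real_indicator simp: less_top[symmetric] measure_pmf.emeasure_finite)
  also have "\<dots> = \<integral>t. (2 ^ n / 2 :: real) \<partial>measure_pmf A"
  proof (rule integral_cong_AE)
    show "AE t in measure_pmf A. (\<Sum>x\<in>inputs n. indicator {t. dt_eval t x = parity x} t) = (2 ^ n / 2 :: real)"
      unfolding AE_measure_pmf_iff
    proof
      fix t assume "t \<in> set_pmf A"
      hence v: "dt_valid n t" and q: "\<forall>x\<in>inputs n. dt_queries t x < n"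
        using alg T unfolding classical_alg_def by force+
      have "2 * card {x \<in> inputs n. dt_eval t x = parity x} = 2 ^ n" by (rule tree_half[OF v q])
      hence "real (card {x \<in> inputs n. dt_eval t x = parity x}) = 2 ^ n / 2"
        by (metis (mono_tags, lifting) nonzero_mult_div_cancel_left of_nat_mult of_nat_numeral of_nat_power zero_neq_numeral)
      thus "(\<Sum>x\<in>inputs n. indicator {t. dt_eval t x = parity x} t) = (2 ^ n / 2 :: real)"
        by (simp add: sum_ind_card)
    qed
  qed auto
  also have "\<dots> = 2 ^ n / 2" by simp
  finally show ?thesis .
qed

lemma exists_le_avg:
  fixes f :: "'a \<Rightarrow> real"
  assumes "finite I" "I \<noteq> {}" "(\<Sum>x\<in>I. f x) \<le> real (card I) * c"
  shows "\<exists>x\<in>I. f x \<le> c"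
proof (rule ccontr)
  assume "\<not> ?thesis"
  hence "\<forall>x\<in>I. c < f x" by auto
  hence "(\<Sum>x\<in>I. c) < (\<Sum>x\<in>I. f x)" using assms(1,2) by (intro sum_strict_mono) auto
  thus False using assms(3) by simp
qed

lemma inputs_ne: "inputs n \<noteq> {}" using replicate_inputs by auto

lemma classical_low:
  assumes alg: "classical_alg n T A" and T: "T < n"
  shows "\<exists>x\<in>inputs n. classical_succ A parity x \<le> 1/2"
  by (rule exists_le_avg) (use classical_sum[OF alg T] card_inputs inputs_ne in auto)

fun bt :: "nat \<Rightarrow> nat \<Rightarrow> bool \<Rightarrow> dtree" where
  "bt 0 k acc = Leaf acc"
| "bt (Suc r) k acc = Node k (bt r (Suc k) acc) (bt r (Suc k) (\<not> acc))"

lemma bt_eval: "k + r \<le> length x \<Longrightarrow> dt_eval (bt r k acc) x = (acc \<noteq> parity (take r (drop k x)))"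
proof (induction r arbitrary: k acc)
  case 0 then show ?case by (simp add: parity_def)
next
  case (Suc r)
  have k: "k < length x" using Suc.prems by simp
  have d: "drop k x = x ! k # drop (Suc k) x" using Cons_nth_drop_Suc[OF k] by simp
  have "Suc k + r \<le> length x" using Suc.prems by simp
  note ih = Suc.IH[OF this]
  show ?case unfolding d using ih by (auto simp: parity_def)
qed

lemma bt_queries: "dt_queries (bt r k acc) x = r"
  by (induction r arbitrary: k acc) auto

lemma bt_valid: "k + r \<le> n \<Longrightarrow> dt_valid n (bt r k acc)"
  by (induction r arbitrary: k acc) auto

definition A0 :: "nat \<Rightarrow> dtree pmf" where "A0 n = return_pmf (bt n 0 False)"

lemma A0_alg: "classical_alg n n (A0 n)"
  unfolding classical_alg_def A0_def by (auto simp: bt_queries bt_valid)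

lemma A0_succ: "x \<in> inputs n \<Longrightarrow> classical_succ (A0 n) parity x = 1"
  unfolding classical_succ_def A0_def inputs_def by (auto simp: bt_eval)

lemma Min_const_img: "finite I \<Longrightarrow> I \<noteq> {} \<Longrightarrow> (\<forall>x\<in>I. f x = c) \<Longrightarrow> Min (f ` I) = (c::real)"
proof -
  assume "finite I" "I \<noteq> {}" "\<forall>x\<in>I. f x = c"
  hence "f ` I = {c}" by auto
  thus ?thesis by simp
qed

lemma bias_pos:
  fixes f :: "'a \<Rightarrow> real"
  assumes "finite I" "Min (f ` I) - 1/2 > 0" "x \<in> I"
  shows "f x > 1/2"
proof -
  have "Min (f ` I) \<le> f x" using assms by (intro Min_le) auto
  thus ?thesis using assms by linarith
qed

lemma bias_le:
  fixes f :: "'a \<Rightarrow> real"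
  assumes "finite I" "x \<in> I" "f x \<le> 1"
  shows "Min (f ` I) - 1/2 \<le> 1/2"
proof -
  have "Min (f ` I) \<le> f x" using assms by (intro Min_le) auto
  thus ?thesis using assms by linarith
qed

lemma log_nonneg_bias: "0 < (b::real) \<Longrightarrow> b \<le> 1/2 \<Longrightarrow> 0 \<le> log 2 (1 / (2 * b))"
  by (simp add: field_simps)

lemma UC_parity: "UC n parity = n"
  unfolding UC_def
proof (rule Least_equality)
  show "\<exists>A. classical_alg n n A \<and> (\<forall>x\<in>inputs n. 1/2 < classical_succ A parity x)"
    using A0_alg A0_succ by (intro exI[of _ "A0 n"]) auto
next
  fix T assume "\<exists>A. classical_alg n T A \<and> (\<forall>x\<in>inputs n. 1/2 < classical_succ A parity x)"
  then obtain A where "classical_alg n T A" "\<forall>x\<in>inputs n. 1/2 < classical_succ A parity x" by blast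
  thus "n \<le> T" using classical_low[of n T A] by force
qed

lemma WUC_parity: "WUC n parity = real n"
  unfolding WUC_def
proof (rule cInf_eq_minimum)
  have b: "classical_bias n (A0 n) parity = 1/2"
    unfolding classical_bias_def using Min_const_img[OF finite_inputs inputs_ne, where f="\<lambda>x. classical_succ (A0 n) parity x" and c=1] A0_succ
    by simp
  show "real n \<in> {real T + log 2 (1 / (2 * classical_bias n A parity)) |T A.
                   classical_alg n T A \<and> 0 < classical_bias n A parity}"
    using A0_alg[of n] b by (intro CollectI exI[of _ n] exI[of _ "A0 n"]) (simp add: b)
next
  fix y assume "y \<in> {real T + log 2 (1 / (2 * classical_bias n A parity)) |T A.
                   classical_alg n T A \<and> 0 < classical_bias n A parity}"
  then obtain T A where y: "y = real T + log 2 (1 / (2 * classical_bias n A parity))"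
    and alg: "classical_alg n T A" and pos: "0 < classical_bias n A parity" by blast
  have all: "\<forall>x\<in>inputs n. classical_succ A parity x > 1/2"
    using bias_pos[OF finite_inputs] pos unfolding classical_bias_def by blast
  have "n \<le> T" using classical_low[OF alg] all by force
  moreover have "classical_bias n A parity \<le> 1/2"
    unfolding classical_bias_def
    by (rule bias_le[OF finite_inputs replicate_inputs]) (simp add: classical_succ_def)
  ultimately show "real n \<le> y" using y log_nonneg_bias[OF pos] by simp
qed


definition mono :: "nat set \<Rightarrow> bool list \<Rightarrow> complex" where
  "mono S x = (if \<forall>i\<in>S. x ! i then 1 else 0)"

inductive pdeg :: "nat \<Rightarrow> (bool list \<Rightarrow> complex) \<Rightarrow> bool" for d where
  pmono: "finite S \<Longrightarrow> card S \<le> d \<Longrightarrow> pdeg d (\<lambda>x. c * mono S x)"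
| padd: "pdeg d f \<Longrightarrow> pdeg d g \<Longrightarrow> pdeg d (\<lambda>x. f x + g x)"

lemma pdeg_const: "pdeg d (\<lambda>x. c)"
proof -
  have "pdeg d (\<lambda>x. c * mono {} x)" by (rule pmono) auto
  moreover have "(\<lambda>x. c * mono {} x) = (\<lambda>x. c)" by (simp add: mono_def)
  ultimately show ?thesis by simp
qed

lemma pdeg_le: "pdeg d f \<Longrightarrow> d \<le> e \<Longrightarrow> pdeg e f"
proof (induction rule: pdeg.induct)
  case (pmono S c) then show ?case by (intro pdeg.pmono) auto
next
  case (padd f g) then show ?case by (intro pdeg.padd) auto
qed

lemma pdeg_scale: "pdeg d f \<Longrightarrow> pdeg d (\<lambda>x. a * f x)"
proof (induction rule: pdeg.induct)
  case (pmono S c)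
  have "pdeg d (\<lambda>x. (a * c) * mono S x)" using pmono by (intro pdeg.pmono) auto
  then show ?case by (simp add: mult.assoc)
next
  case (padd f g)
  have "pdeg d (\<lambda>x. a * f x + a * g x)" using padd by (intro pdeg.padd)
  then show ?case by (simp add: distrib_left)
qed

lemma pdeg_sum: "finite I \<Longrightarrow> (\<And>i. i \<in> I \<Longrightarrow> pdeg d (f i)) \<Longrightarrow> pdeg d (\<lambda>x. \<Sum>i\<in>I. f i x)"
proof (induction I rule: finite_induct)
  case empty then show ?case using pdeg_const[of d 0] by simp
next
  case (insert a I)
  have "pdeg d (\<lambda>x. f a x + (\<Sum>i\<in>I. f i x))"
    using insert by (intro pdeg.padd) auto
  then show ?case using insert by simp
qed

lemma mono_mult: "mono S x * mono T x = mono (S \<union> T) x"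
  unfolding mono_def by auto

lemma pdeg_mult_mono:
  assumes "pdeg e g" "finite S" "card S \<le> d"
  shows "pdeg (d + e) (\<lambda>x. (c * mono S x) * g x)"
  using assms(1)
proof (induction rule: pdeg.induct)
  case (pmono T c')
  have "card (S \<union> T) \<le> d + e" using card_Un_le[of S T] pmono assms by linarith
  hence "pdeg (d + e) (\<lambda>x. (c * c') * mono (S \<union> T) x)" using pmono assms by (intro pdeg.pmono) auto
  then show ?case by (simp add: mono_mult[symmetric] mult_ac)
next
  case (padd f g)
  have "pdeg (d + e) (\<lambda>x. (c * mono S x) * f x + (c * mono S x) * g x)" using padd by (intro pdeg.padd)
  then show ?case by (simp add: distrib_left)
qed

lemma pdeg_mult: "pdeg d f \<Longrightarrow> pdeg e g \<Longrightarrow> pdeg (d + e) (\<lambda>x. f x * g x)"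
proof (induction rule: pdeg.induct)
  case (pmono S c) then show ?case using pdeg_mult_mono by blast
next
  case (padd f1 f2)
  have "pdeg (d + e) (\<lambda>x. f1 x * g x + f2 x * g x)" using padd by (intro pdeg.padd)
  then show ?case by (simp add: distrib_right)
qed

lemma pdeg_cnj: "pdeg d f \<Longrightarrow> pdeg d (\<lambda>x. cnj (f x))"
proof (induction rule: pdeg.induct)
  case (pmono S c)
  have "pdeg d (\<lambda>x. cnj c * mono S x)" using pmono by (intro pdeg.pmono) auto
  moreover have "(\<lambda>x. cnj (c * mono S x)) = (\<lambda>x. cnj c * mono S x)" by (auto simp: mono_def)
  ultimately show ?case by simp
next
  case (padd f g)
  have "pdeg d (\<lambda>x. cnj (f x) + cnj (g x))" using padd by (intro pdeg.padd)
  then show ?case by simp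
qed

lemma pdeg_query:
  assumes "pdeg d f" "pdeg d g"
  shows "pdeg (Suc d) (\<lambda>x. if x ! i then g x else f x)"
proof -
  have m: "pdeg 1 (\<lambda>x. mono {i} x)" using pdeg.pmono[of "{i}" 1 1] by simp
  have "pdeg (1 + d) (\<lambda>x. mono {i} x * g x)" by (rule pdeg_mult[OF m assms(2)])
  moreover have "pdeg (1 + d) (\<lambda>x. -1 * (mono {i} x * f x))" by (rule pdeg_scale, rule pdeg_mult[OF m assms(1)])
  moreover have "pdeg (1 + d) f" using pdeg_le[OF assms(1)] by simp
  ultimately have "pdeg (1 + d) (\<lambda>x. f x + (mono {i} x * g x + -1 * (mono {i} x * f x)))"
    by (intro pdeg.padd)
  moreover have "(\<lambda>x. f x + (mono {i} x * g x + -1 * (mono {i} x * f x))) = (\<lambda>x. if x ! i then g x else f x)"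
    by (auto simp: mono_def)
  ultimately show ?thesis by simp
qed

lemma flip_sum:
  assumes j: "j < n" and inv: "\<And>x. x \<in> inputs n \<Longrightarrow> g (flip j x) = g x"
  shows "(\<Sum>x\<in>inputs n. (-1) ^ cnt x * g x) = (0 :: complex)"
proof -
  let ?F = "\<lambda>x. (-1) ^ cnt x * g x"
  have neg: "?F (flip j x) = - ?F x" if x: "x \<in> inputs n" for x
  proof -
    have "length x = n" using x by (simp add: inputs_def)
    hence "odd (cnt (flip j x)) = even (cnt x)" using cnt_flip j by simp
    hence "(-1 :: complex) ^ cnt (flip j x) = - ((-1) ^ cnt x)"
      by (cases "even (cnt x)") auto
    thus ?thesis using inv[OF x] by simp
  qed
  have "(\<Sum>x\<in>inputs n. ?F x) = (\<Sum>x\<in>inputs n. ?F (flip j x))"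
    by (rule sum.reindex_bij_witness[where i="flip j" and j="flip j"]) (auto simp: inputs_flip)
  also have "\<dots> = (\<Sum>x\<in>inputs n. - ?F x)" by (rule sum.cong) (auto simp: neg)
  also have "\<dots> = - (\<Sum>x\<in>inputs n. ?F x)" by (simp add: sum_negf)
  finally show ?thesis by simp
qed

lemma pdeg_orth: "pdeg d f \<Longrightarrow> d < n \<Longrightarrow> (\<Sum>x\<in>inputs n. (-1) ^ cnt x * f x) = (0 :: complex)"
proof (induction rule: pdeg.induct)
  case (pmono S c)
  have "\<not> {..<n} \<subseteq> S"
  proof
    assume "{..<n} \<subseteq> S"
    hence "card {..<n} \<le> card S" using card_mono pmono by blast
    thus False using pmono by simp
  qed
  then obtain j where j: "j < n" "j \<notin> S" by auto
  show ?case
  proof (rule flip_sum[OF j(1)])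
    fix x assume "x \<in> inputs n"
    show "c * mono S (flip j x) = c * mono S x"
      unfolding mono_def using j by (auto simp: flip_nth)
  qed
next
  case (padd f g)
  then show ?case by (simp add: distrib_left sum.distrib)
qed


lemma decomp_div:
  fixes W :: nat
  assumes W: "W > 0" and b: "b < 2" and z: "z < W"
  shows "(i * (2 * W) + b * W + z) div (2 * W) = i"
    "(i * (2 * W) + b * W + z) mod (2 * W) div W = b"
    "(i * (2 * W) + b * W + z) mod W = z"
proof -
  have "b * W \<le> W" using b by (cases "b = 0") auto
  hence r: "b * W + z < 2 * W" using z by linarith
  have e: "i * (2 * W) + b * W + z = i * (2 * W) + (b * W + z)" by simp
  show "(i * (2 * W) + b * W + z) div (2 * W) = i" unfolding e using r W by simp
  have "(i * (2 * W) + b * W + z) mod (2 * W) = b * W + z" unfolding e using r W by simp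
  thus "(i * (2 * W) + b * W + z) mod (2 * W) div W = b" using z W by simp
  have "i * (2 * W) + b * W + z = (i * 2 + b) * W + z" by (simp add: algebra_simps)
  thus "(i * (2 * W) + b * W + z) mod W = z" using z by simp
qed

lemma decomp:
  fixes W :: nat
  assumes W: "W > 0"
  shows "c = c div (2 * W) * (2 * W) + c mod (2 * W) div W * W + c mod W"
    "c mod (2 * W) div W < 2"
proof -
  have "c mod (2 * W) = c mod (2 * W) div W * W + c mod (2 * W) mod W" by simp
  moreover have "c mod (2 * W) mod W = c mod W" by (simp add: mod_mod_cancel)
  ultimately show "c = c div (2 * W) * (2 * W) + c mod (2 * W) div W * W + c mod W"
    by (metis add.assoc div_mult_mod_eq)
  have "c mod (2 * W) < 2 * W" using W by simp
  thus "c mod (2 * W) div W < 2" using W by (simp add: div_less_iff_less_mult)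
qed

definition qflip :: "nat \<Rightarrow> nat \<Rightarrow> nat" where
  "qflip W c = c div (2 * W) * (2 * W) + (1 - c mod (2 * W) div W) * W + c mod W"

lemma qry_perm_alt: "W > 0 \<Longrightarrow> qry_perm W x c = (if x ! (c div (2 * W)) then qflip W c else c)"
  unfolding qry_perm_def qflip_def Let_def using decomp(1)[of W c] by auto

lemma qry_perm_inv:
  assumes W: "W > 0" and c: "c < n * (2 * W)"
  shows "qry_perm W x c < n * (2 * W) \<and> qry_perm W x (qry_perm W x c) = c"
proof -
  define i where "i = c div (2 * W)"
  define b where "b = c mod (2 * W) div W"
  define z where "z = c mod W"
  have b2: "b < 2" unfolding b_def using decomp(2)[OF W] .
  have z: "z < W" unfolding z_def using W by simp
  have cd: "c = i * (2 * W) + b * W + z" unfolding i_def b_def z_def using decomp(1)[OF W] .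
  have iN: "i < n" unfolding i_def using c by (simp add: div_less_iff_less_mult W)
  define b' where "b' = (if x ! i then 1 - b else b)"
  have b'2: "b' < 2" unfolding b'_def using b2 by auto
  have p: "qry_perm W x c = i * (2 * W) + b' * W + z"
    unfolding qry_perm_def Let_def b'_def i_def b_def z_def by simp
  note d = decomp_div[OF W b'2 z, of i]
  have "qry_perm W x (qry_perm W x c) = qry_perm W x (i * (2 * W) + b' * W + z)"
    using p by simp
  also have "\<dots> = i * (2 * W) + (if x ! i then 1 - b' else b') * W + z"
    unfolding qry_perm_def Let_def d by simp
  also have "(if x ! i then 1 - b' else b') = b" unfolding b'_def using b2 by auto
  finally have inv: "qry_perm W x (qry_perm W x c) = c" using cd by simp
  have "b' * W \<le> W" using b'2 by (cases "b' = 0") auto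
  hence "b' * W + z < 2 * W" using z by linarith
  hence "i * (2 * W) + b' * W + z < (i + 1) * (2 * W)" by (simp add: algebra_simps)
  also have "\<dots> \<le> n * (2 * W)" using iN by (intro mult_right_mono) auto
  finally show ?thesis using inv p by simp
qed

lemma query_apply:
  assumes W: "W > 0" and r: "r < qdim n W" and v: "v \<in> carrier_vec (qdim n W)"
  shows "(query_op n W x *\<^sub>v v) $ r = v $ (qry_perm W x r)"
proof -
  let ?d = "qdim n W"
  have "(query_op n W x *\<^sub>v v) $ r = (\<Sum>c\<in>{0..<?d}. (if r = qry_perm W x c then 1 else 0) * v $ c)"
    using r v unfolding query_op_def by (simp add: scalar_prod_def)
  also have "\<dots> = (\<Sum>c\<in>{0..<?d}. (if c = qry_perm W x r then v $ c else 0))"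
  proof (rule sum.cong)
    fix c assume c: "c \<in> {0..<?d}"
    have "r = qry_perm W x c \<longleftrightarrow> c = qry_perm W x r"
      using qry_perm_inv[OF W] c r unfolding qdim_def by auto
    thus "(if r = qry_perm W x c then 1 else 0) * v $ c = (if c = qry_perm W x r then v $ c else 0)"
      by simp
  qed simp
  also have "\<dots> = v $ (qry_perm W x r)"
    using qry_perm_inv[OF W, of r n x] r unfolding qdim_def by (simp add: sum.delta')
  finally show ?thesis .
qed


lemma qflip_lt:
  assumes W: "W > 0" and c: "c < qdim n W"
  shows "qflip W c < qdim n W"
proof -
  define x0 where "x0 = replicate (Suc (c div (2 * W))) True"
  have "x0 ! (c div (2 * W)) = True" unfolding x0_def by (rule nth_replicate) simp
  hence "qry_perm W x0 c = qflip W c" using qry_perm_alt[OF W] by simp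
  thus ?thesis using qry_perm_inv[OF W, of c n x0] c unfolding qdim_def by simp
qed
lemma rowdot:
  assumes U: "U \<in> carrier_mat d d" and j: "j < d" and w: "dim_vec w = d"
  shows "Matrix.row U j \<bullet> w = (\<Sum>c\<in>{0..<d}. U $$ (j, c) * w $ c)"
  unfolding scalar_prod_def w using U j by (intro sum.cong) auto

lemma amp:
  assumes W: "W > 0" and Us: "\<forall>U\<in>set Us. U \<in> carrier_mat (qdim n W) (qdim n W)"
    and V: "\<And>x. V x \<in> carrier_vec (qdim n W)"
    and deg: "\<And>j. j < qdim n W \<Longrightarrow> pdeg k (\<lambda>x. V x $ j)"
  shows "(\<forall>x. q_run (query_op n W x) Us (V x) \<in> carrier_vec (qdim n W)) \<and>
         (\<forall>j < qdim n W. pdeg (k + length Us) (\<lambda>x. q_run (query_op n W x) Us (V x) $ j))"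
  using Us V deg
proof (induction Us arbitrary: V k)
  case Nil then show ?case by simp
next
  case (Cons U Us)
  let ?d = "qdim n W"
  have U: "U \<in> carrier_mat ?d ?d" using Cons.prems by simp
  define V' where "V' x = U *\<^sub>v (query_op n W x *\<^sub>v V x)" for x
  have V': "V' x \<in> carrier_vec ?d" for x unfolding V'_def by (intro carrier_vecI) (simp add: carrier_matD[OF U])
  have deg': "pdeg (Suc k) (\<lambda>x. V' x $ j)" if j: "j < ?d" for j
  proof -
    have e: "V' x $ j = (\<Sum>c\<in>{0..<?d}. U $$ (j, c) * (if x ! (c div (2 * W)) then V x $ qflip W c else V x $ c))" for x
    proof -
      have dQ: "dim_vec (query_op n W x *\<^sub>v V x) = ?d" unfolding query_op_def by simp
      have "V' x $ j = Matrix.row U j \<bullet> (query_op n W x *\<^sub>v V x)"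
        unfolding V'_def using U j by (metis carrier_matD(1) index_mult_mat_vec)
      also have "\<dots> = (\<Sum>c\<in>{0..<?d}. U $$ (j, c) * (query_op n W x *\<^sub>v V x) $ c)"
        by (rule rowdot[OF U j dQ])
      also have "\<dots> = (\<Sum>c\<in>{0..<?d}. U $$ (j, c) * (if x ! (c div (2 * W)) then V x $ qflip W c else V x $ c))"
      proof (rule sum.cong)
        fix c assume c: "c \<in> {0..<?d}"
        have "(query_op n W x *\<^sub>v V x) $ c = V x $ qry_perm W x c"
          using c by (intro query_apply[OF W] Cons.prems(2)) auto
        thus "U $$ (j, c) * (query_op n W x *\<^sub>v V x) $ c = U $$ (j, c) * (if x ! (c div (2 * W)) then V x $ qflip W c else V x $ c)"
          by (simp add: qry_perm_alt[OF W])
      qed simp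
      finally show ?thesis .
    qed
    have "pdeg (Suc k) (\<lambda>x. \<Sum>c\<in>{0..<?d}. U $$ (j, c) * (if x ! (c div (2 * W)) then V x $ qflip W c else V x $ c))"
    proof (rule pdeg_sum)
      fix c assume c: "c \<in> {0..<?d}"
      have "pdeg k (\<lambda>x. V x $ c)" using c by (intro Cons.prems(3)) auto
      moreover have "pdeg k (\<lambda>x. V x $ qflip W c)" using c by (intro Cons.prems(3) qflip_lt[OF W]) auto
      ultimately show "pdeg (Suc k) (\<lambda>x. U $$ (j, c) * (if x ! (c div (2 * W)) then V x $ qflip W c else V x $ c))"
        by (intro pdeg_scale pdeg_query)
    qed simp
    thus ?thesis unfolding e .
  qed
  have "(\<forall>x. q_run (query_op n W x) Us (V' x) \<in> carrier_vec ?d) \<and>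
         (\<forall>j < ?d. pdeg (Suc k + length Us) (\<lambda>x. q_run (query_op n W x) Us (V' x) $ j))"
    by (rule Cons.IH) (use Cons.prems V' deg' in auto)
  thus ?case unfolding V'_def by simp
qed

lemma final_deg:
  assumes alg: "quantum_alg n T W U0 Us"
  shows "\<And>j. j < qdim n W \<Longrightarrow> pdeg T (\<lambda>x. q_final n W U0 Us x $ j)"
proof -
  fix j assume j: "j < qdim n W"
  have W: "W > 0" using alg unfolding quantum_alg_def by simp
  have U0: "U0 \<in> carrier_mat (qdim n W) (qdim n W)" and Us: "\<forall>U\<in>set Us. U \<in> carrier_mat (qdim n W) (qdim n W)"
    and len: "length Us = T"
    using alg unfolding quantum_alg_def unitary_mat_def by auto
  have "pdeg (0 + length Us) (\<lambda>x. q_run (query_op n W x) Us (U0 *\<^sub>v unit_vec (qdim n W) 0) $ j)"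
    using amp[OF W Us, where V="\<lambda>x. U0 *\<^sub>v unit_vec (qdim n W) 0" and k=0] U0 j
    by (auto intro: pdeg_const)
  thus "pdeg T (\<lambda>x. q_final n W U0 Us x $ j)" unfolding q_final_def len by simp
qed

lemma prob_deg:
  assumes alg: "quantum_alg n T W U0 Us"
  shows "pdeg (T + T) (\<lambda>x. complex_of_real (q_prob1 n W U0 Us Acc x))"
proof -
  have e: "complex_of_real (q_prob1 n W U0 Us Acc x) =
     (\<Sum>j\<in>Acc \<inter> {..<qdim n W}. q_final n W U0 Us x $ j * cnj (q_final n W U0 Us x $ j))" for x
    unfolding q_prob1_def of_real_sum by (rule sum.cong) (rule refl, rule complex_norm_square)
  show ?thesis unfolding e
    by (intro pdeg_sum pdeg_mult pdeg_cnj final_deg[OF alg]) auto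
qed

lemma quantum_low:
  assumes alg: "quantum_alg n T W U0 Us"
    and succ: "\<forall>x\<in>inputs n. quantum_succ n W U0 Us Acc parity x > 1/2"
  shows "n \<le> T + T"
proof (rule ccontr)
  assume "\<not> n \<le> T + T"
  hence lt: "T + T < n" by simp
  let ?p = "\<lambda>x. q_prob1 n W U0 Us Acc x"
  have "pdeg (T + T) (\<lambda>x. complex_of_real (?p x) + (- 1/2))"
    by (intro pdeg.padd prob_deg[OF alg] pdeg_const)
  from pdeg_orth[OF this lt]
  have z: "(\<Sum>x\<in>inputs n. (-1) ^ cnt x * (complex_of_real (?p x) + (- 1/2))) = 0" .
  define t where "t x = (if odd (cnt x) then -1 else 1) * (?p x - 1/2)" for x
  have tneg: "t x < 0" if x: "x \<in> inputs n" for x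
    using succ[rule_format, OF x] unfolding t_def quantum_succ_def parity_cnt by (auto split: if_splits)
  have "(\<Sum>x\<in>inputs n. (-1) ^ cnt x * (complex_of_real (?p x) + (- 1/2))) = complex_of_real (\<Sum>x\<in>inputs n. t x)"
    unfolding of_real_sum by (rule sum.cong) (auto simp: t_def)
  hence "complex_of_real (\<Sum>x\<in>inputs n. t x) = 0" using z by simp
  hence "(\<Sum>x\<in>inputs n. t x) = 0" by (simp only: of_real_eq_0_iff)
  moreover have "(\<Sum>x\<in>inputs n. t x) < (\<Sum>x\<in>inputs n. 0)"
    using tneg inputs_ne by (intro sum_strict_mono) auto
  ultimately show False by simp
qed


definition hh :: complex where "hh = complex_of_real (1 / sqrt 2)"

lemma hh_sq: "hh * hh = 1/2"
proof -
  have "(1 / sqrt 2) * (1 / sqrt 2) = (1/2 :: real)" by (simp add: field_simps)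
  hence "complex_of_real ((1 / sqrt 2) * (1 / sqrt 2)) = 1/2" by simp
  thus ?thesis unfolding hh_def by (simp only: of_real_mult)
qed

lemma cnj_hh[simp]: "cnj hh = hh" unfolding hh_def by simp

lemma sum2:
  fixes a b d :: nat
  assumes "a < d" "b < d" "a \<noteq> b" "\<And>c. c < d \<Longrightarrow> c \<noteq> a \<Longrightarrow> c \<noteq> b \<Longrightarrow> f c = 0"
  shows "(\<Sum>c\<in>{0..<d}. f c) = f a + f b"
proof -
  have "(\<Sum>c\<in>{0..<d}. f c) = (\<Sum>c\<in>{a, b}. f c)"
    by (rule sum.mono_neutral_right) (use assms in auto)
  thus ?thesis using assms(3) by simp
qed

lemma sum1:
  fixes a d :: nat
  assumes "a < d" "\<And>c. c < d \<Longrightarrow> c \<noteq> a \<Longrightarrow> f c = 0"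
  shows "(\<Sum>c\<in>{0..<d}. f c) = f a"
proof -
  have "(\<Sum>c\<in>{0..<d}. f c) = (\<Sum>c\<in>{a}. f c)"
    by (rule sum.mono_neutral_right) (use assms in auto)
  thus ?thesis by simp
qed

lemma apply_mat:
  assumes v: "v \<in> carrier_vec d" and r: "r < d"
  shows "(mat d d g *\<^sub>v v) $ r = (\<Sum>c\<in>{0..<d}. g (r, c) * v $ c)"
proof -
  have "(mat d d g *\<^sub>v v) $ r = Matrix.row (mat d d g) r \<bullet> v" using r by simp
  also have "\<dots> = (\<Sum>c\<in>{0..<d}. mat d d g $$ (r, c) * v $ c)"
    by (rule rowdot) (use r v in auto)
  also have "\<dots> = (\<Sum>c\<in>{0..<d}. g (r, c) * v $ c)" using r by (intro sum.cong) auto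
  finally show ?thesis .
qed

definition Gm :: "nat \<Rightarrow> complex mat" where
  "Gm d = mat d d (\<lambda>(r,c). if r div 2 = c div 2 then (if odd r \<and> odd c then -hh else hh) else 0)"

lemma Gm_carrier[simp]: "Gm d \<in> carrier_mat d d" unfolding Gm_def by simp

lemma Gm_apply:
  assumes d: "even d" and v: "v \<in> carrier_vec d" and r: "r < d"
  shows "(Gm d *\<^sub>v v) $ r = hh * v $ (2 * (r div 2)) + (if odd r then -hh else hh) * v $ (2 * (r div 2) + 1)"
proof -
  let ?g = "\<lambda>(r,c). if r div 2 = c div 2 then (if odd r \<and> odd c then -hh else hh) else (0::complex)"
  have a: "2 * (r div 2) < d" using r by linarith
  have b: "2 * (r div 2) + 1 < d" using r d by presburger
  have "(Gm d *\<^sub>v v) $ r = (\<Sum>c\<in>{0..<d}. ?g (r, c) * v $ c)" unfolding Gm_def by (rule apply_mat[OF v r])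
  also have "\<dots> = ?g (r, 2 * (r div 2)) * v $ (2 * (r div 2)) + ?g (r, 2 * (r div 2) + 1) * v $ (2 * (r div 2) + 1)"
  proof (rule sum2[OF a b])
    fix c assume "c < d" "c \<noteq> 2 * (r div 2)" "c \<noteq> 2 * (r div 2) + 1"
    hence "r div 2 \<noteq> c div 2" by presburger
    thus "?g (r, c) * v $ c = 0" by simp
  qed simp
  also have "\<dots> = hh * v $ (2 * (r div 2)) + (if odd r then -hh else hh) * v $ (2 * (r div 2) + 1)"
    by simp
  finally show ?thesis .
qed

lemma Gm_unitary:
  assumes d: "even d"
  shows "unitary_mat d (Gm d)"
proof (rule unitary_sym)
  show "Gm d \<in> carrier_mat d d" by simp
  fix i j assume "i < d" "j < d"
  thus "cnj (Gm d $$ (j, i)) = Gm d $$ (i, j)" unfolding Gm_def by auto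
next
  fix v :: "complex vec" assume v: "v \<in> carrier_vec d"
  have Gv: "Gm d *\<^sub>v v \<in> carrier_vec d" using v by (intro carrier_vecI) (simp add: Gm_def)
  show "Gm d *\<^sub>v (Gm d *\<^sub>v v) = v"
  proof (rule eq_vecI)
    show "dim_vec (Gm d *\<^sub>v (Gm d *\<^sub>v v)) = dim_vec v" using v by (simp add: Gm_def)
    fix r assume "r < dim_vec v"
    hence r: "r < d" using v by simp
    define i where "i = r div 2"
    have a: "2 * i < d" using r unfolding i_def by linarith
    have b: "2 * i + 1 < d" using r d unfolding i_def by presburger
    have e0: "(Gm d *\<^sub>v v) $ (2 * i) = hh * v $ (2 * i) + hh * v $ (2 * i + 1)"
      using Gm_apply[OF d v a] by simp
    have e1: "(Gm d *\<^sub>v v) $ (2 * i + 1) = hh * v $ (2 * i) - hh * v $ (2 * i + 1)"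
      using Gm_apply[OF d v b] by simp
    have "(Gm d *\<^sub>v (Gm d *\<^sub>v v)) $ r = hh * (Gm d *\<^sub>v v) $ (2 * i) + (if odd r then -hh else hh) * (Gm d *\<^sub>v v) $ (2 * i + 1)"
      using Gm_apply[OF d Gv r] unfolding i_def by simp
    also have "\<dots> = (if odd r then v $ (2 * i + 1) else v $ (2 * i))"
      unfolding e0 e1 using hh_sq by (auto simp: algebra_simps)
    also have "\<dots> = v $ r"
    proof -
      have "odd r \<Longrightarrow> 2 * i + 1 = r" "even r \<Longrightarrow> 2 * i = r" unfolding i_def by presburger+
      thus ?thesis by auto
    qed
    finally show "(Gm d *\<^sub>v (Gm d *\<^sub>v v)) $ r = v $ r" .
  qed
qed

definition Pm :: "(nat \<Rightarrow> nat) \<Rightarrow> nat \<Rightarrow> complex mat" where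
  "Pm \<sigma> d = mat d d (\<lambda>(r,c). if r = \<sigma> c then 1 else 0)"

definition invol :: "(nat \<Rightarrow> nat) \<Rightarrow> nat \<Rightarrow> bool" where
  "invol \<sigma> d \<longleftrightarrow> (\<forall>c<d. \<sigma> c < d \<and> \<sigma> (\<sigma> c) = c)"

lemma Pm_carrier[simp]: "Pm \<sigma> d \<in> carrier_mat d d" unfolding Pm_def by simp

lemma Pm_apply:
  assumes s: "invol \<sigma> d" and v: "v \<in> carrier_vec d" and r: "r < d"
  shows "(Pm \<sigma> d *\<^sub>v v) $ r = v $ (\<sigma> r)"
proof -
  have "(Pm \<sigma> d *\<^sub>v v) $ r = (\<Sum>c\<in>{0..<d}. (if r = \<sigma> c then 1 else 0) * v $ c)"
    unfolding Pm_def by (rule apply_mat[OF v r, where g="\<lambda>(r,c). if r = \<sigma> c then 1 else 0", simplified])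
  also have "\<dots> = (if r = \<sigma> (\<sigma> r) then 1 else 0) * v $ (\<sigma> r)"
  proof (rule sum1)
    show "\<sigma> r < d" using s r unfolding invol_def by auto
    fix c assume "c < d" "c \<noteq> \<sigma> r"
    hence "r \<noteq> \<sigma> c" using s unfolding invol_def by auto
    thus "(if r = \<sigma> c then 1 else 0) * v $ c = 0" by simp
  qed
  also have "\<dots> = v $ (\<sigma> r)" using s r unfolding invol_def by auto
  finally show ?thesis .
qed

lemma Pm_unitary:
  assumes s: "invol \<sigma> d"
  shows "unitary_mat d (Pm \<sigma> d)"
proof (rule unitary_sym)
  show "Pm \<sigma> d \<in> carrier_mat d d" by simp
  fix i j assume "i < d" "j < d"
  thus "cnj (Pm \<sigma> d $$ (j, i)) = Pm \<sigma> d $$ (i, j)" using s unfolding Pm_def invol_def by auto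
next
  fix v :: "complex vec" assume v: "v \<in> carrier_vec d"
  have Pv: "Pm \<sigma> d *\<^sub>v v \<in> carrier_vec d" using v by (intro carrier_vecI) (simp add: Pm_def)
  show "Pm \<sigma> d *\<^sub>v (Pm \<sigma> d *\<^sub>v v) = v"
  proof (rule eq_vecI)
    show "dim_vec (Pm \<sigma> d *\<^sub>v (Pm \<sigma> d *\<^sub>v v)) = dim_vec v" using v by (simp add: Pm_def)
    fix r assume "r < dim_vec v"
    hence r: "r < d" using v by simp
    have sr: "\<sigma> r < d" "\<sigma> (\<sigma> r) = r" using s r unfolding invol_def by auto
    show "(Pm \<sigma> d *\<^sub>v (Pm \<sigma> d *\<^sub>v v)) $ r = v $ r"
      using Pm_apply[OF s Pv r] Pm_apply[OF s v sr(1)] sr(2) by simp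
  qed
qed

definition Hm :: "nat \<Rightarrow> nat \<Rightarrow> nat \<Rightarrow> complex mat" where
  "Hm a b d = mat d d (\<lambda>(r,c). if r = a then (if c = a \<or> c = b then hh else 0)
     else if r = b then (if c = a then hh else if c = b then -hh else 0) else (if r = c then 1 else 0))"

lemma Hm_carrier[simp]: "Hm a b d \<in> carrier_mat d d" unfolding Hm_def by simp

lemma Hm_apply:
  assumes ab: "a < d" "b < d" "a \<noteq> b" and v: "v \<in> carrier_vec d" and r: "r < d"
  shows "(Hm a b d *\<^sub>v v) $ r = (if r = a then hh * v $ a + hh * v $ b
     else if r = b then hh * v $ a - hh * v $ b else v $ r)"
proof -
  let ?g = "\<lambda>(r,c). if r = a then (if c = a \<or> c = b then hh else 0)
     else if r = b then (if c = a then hh else if c = b then -hh else 0) else (if r = c then 1 else (0::complex))"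
  have e: "(Hm a b d *\<^sub>v v) $ r = (\<Sum>c\<in>{0..<d}. ?g (r, c) * v $ c)" unfolding Hm_def by (rule apply_mat[OF v r])
  show ?thesis
  proof (cases "r = a \<or> r = b")
    case True
    have "(\<Sum>c\<in>{0..<d}. ?g (r, c) * v $ c) = ?g (r, a) * v $ a + ?g (r, b) * v $ b"
      by (rule sum2[OF ab]) (use True in auto)
    thus ?thesis unfolding e using True ab(3) by auto
  next
    case False
    have "(\<Sum>c\<in>{0..<d}. ?g (r, c) * v $ c) = ?g (r, r) * v $ r"
      by (rule sum1[OF r]) (use False in auto)
    thus ?thesis unfolding e using False by auto
  qed
qed

lemma Hm_unitary:
  assumes ab: "a < d" "b < d" "a \<noteq> b"
  shows "unitary_mat d (Hm a b d)"
proof (rule unitary_sym)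
  show "Hm a b d \<in> carrier_mat d d" by simp
  fix i j assume "i < d" "j < d"
  thus "cnj (Hm a b d $$ (j, i)) = Hm a b d $$ (i, j)" unfolding Hm_def by auto
next
  fix v :: "complex vec" assume v: "v \<in> carrier_vec d"
  have Hv: "Hm a b d *\<^sub>v v \<in> carrier_vec d" using v by (intro carrier_vecI) (simp add: Hm_def)
  show "Hm a b d *\<^sub>v (Hm a b d *\<^sub>v v) = v"
  proof (rule eq_vecI)
    show "dim_vec (Hm a b d *\<^sub>v (Hm a b d *\<^sub>v v)) = dim_vec v" using v by (simp add: Hm_def)
    fix r assume "r < dim_vec v"
    hence r: "r < d" using v by simp
    have ea: "(Hm a b d *\<^sub>v v) $ a = hh * v $ a + hh * v $ b" using Hm_apply[OF ab v ab(1)] by simp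
    have eb: "(Hm a b d *\<^sub>v v) $ b = hh * v $ a - hh * v $ b" using Hm_apply[OF ab v ab(2)] ab(3) by simp
    have er: "r \<noteq> a \<Longrightarrow> r \<noteq> b \<Longrightarrow> (Hm a b d *\<^sub>v v) $ r = v $ r" using Hm_apply[OF ab v r] by simp
    show "(Hm a b d *\<^sub>v (Hm a b d *\<^sub>v v)) $ r = v $ r"
    proof -
      have k1: "hh * (hh * v $ a + hh * v $ b) + hh * (hh * v $ a - hh * v $ b) = (2 * (hh * hh)) * v $ a"
        by (simp add: algebra_simps)
      have k2: "hh * (hh * v $ a + hh * v $ b) - hh * (hh * v $ a - hh * v $ b) = (2 * (hh * hh)) * v $ b"
        by (simp add: algebra_simps)
      show ?thesis unfolding Hm_apply[OF ab Hv r] ea eb using er k1 k2 hh_sq ab(3) by auto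
    qed
  qed
qed


definition mq :: "nat \<Rightarrow> nat" where "mq n = (n + 1) div 2"
definition ofs :: "nat \<Rightarrow> nat" where "ofs n = 2 * mq n - n"
definition ps :: "nat \<Rightarrow> nat \<Rightarrow> nat" where "ps n s = (if s < ofs n then 0 else 2 * (s - ofs n) + 1)"
definition pa :: "nat \<Rightarrow> nat \<Rightarrow> nat" where "pa n k = ps n (2 * k)"
definition pb :: "nat \<Rightarrow> nat \<Rightarrow> nat" where "pb n k = ps n (2 * k + 1)"
definition qbit :: "nat \<Rightarrow> bool list \<Rightarrow> nat \<Rightarrow> bool" where "qbit n x s = (ofs n \<le> s \<and> x ! (s - ofs n))"
definition ph :: "nat \<Rightarrow> bool list \<Rightarrow> nat \<Rightarrow> complex" where "ph n x s = (if qbit n x s then -1 else 1)"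
definition ck :: "nat \<Rightarrow> bool list \<Rightarrow> nat \<Rightarrow> nat" where "ck n x k = cnt (take (2 * k - ofs n) x)"

lemma ofs_le: "ofs n \<le> 1" unfolding ofs_def mq_def by linarith
lemma mq_eq: "2 * mq n = n + ofs n" unfolding ofs_def mq_def by linarith
lemma mq_pos: "n \<ge> 1 \<Longrightarrow> mq n \<ge> 1" unfolding mq_def by linarith
lemma ofs_pos: "ofs n = 1 \<Longrightarrow> n \<ge> 1" unfolding ofs_def mq_def by (cases n) auto

lemma ps_lt: "s < 2 * mq n \<Longrightarrow> ps n s < qdim n 1"
  unfolding ps_def qdim_def using mq_eq[of n] ofs_le[of n] ofs_pos[of n] by (auto split: if_splits)

lemma ps_inj: "s < 2 * mq n \<Longrightarrow> s' < 2 * mq n \<Longrightarrow> s \<noteq> s' \<Longrightarrow> ps n s \<noteq> ps n s'"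
  unfolding ps_def using ofs_le[of n] by (auto split: if_splits)

lemma ps_bit:
  assumes "s < 2 * mq n"
  shows "(odd (ps n s) \<and> x ! (ps n s div 2)) = qbit n x s"
  unfolding ps_def qbit_def by auto

lemma cnt_snoc: "cnt (l @ [a]) = cnt l + (if a then 1 else 0)"
  unfolding cnt_def by simp

lemma cnt_step:
  assumes s: "s < 2 * mq n" and x: "length x = n"
  shows "cnt (take (Suc s - ofs n) x) = cnt (take (s - ofs n) x) + (if qbit n x s then 1 else 0)"
proof (cases "s < ofs n")
  case True
  hence "Suc s - ofs n = 0" "s - ofs n = 0" using ofs_le[of n] by auto
  thus ?thesis using True unfolding qbit_def by simp
next
  case False
  hence e: "Suc s - ofs n = Suc (s - ofs n)" by simp
  have "s - ofs n < length x" using s x mq_eq[of n] False by linarith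
  thus ?thesis unfolding e using False by (simp add: take_Suc_conv_app_nth cnt_snoc qbit_def)
qed

lemma ck_step:
  assumes k: "k < mq n" and x: "length x = n"
  shows "ck n x (Suc k) = ck n x k + (if qbit n x (2 * k) then 1 else 0) + (if qbit n x (2 * k + 1) then 1 else 0)"
proof -
  have "ck n x (Suc k) = cnt (take (Suc (2 * k + 1) - ofs n) x)" unfolding ck_def by simp
  also have "\<dots> = cnt (take (2 * k + 1 - ofs n) x) + (if qbit n x (2 * k + 1) then 1 else 0)"
    by (rule cnt_step) (use k x in auto)
  also have "cnt (take (2 * k + 1 - ofs n) x) = cnt (take (Suc (2 * k) - ofs n) x)" by simp
  also have "\<dots> = ck n x k + (if qbit n x (2 * k) then 1 else 0)"
    unfolding ck_def by (rule cnt_step) (use k x in auto)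
  finally show ?thesis by simp
qed

lemma ck_final: "length x = n \<Longrightarrow> ck n x (mq n) = cnt x"
  unfolding ck_def using mq_eq[of n] by simp

lemma ck_0: "ck n x 0 = 0" unfolding ck_def cnt_def by simp

lemma ph_pow: "ph n x s = (-1) ^ (if qbit n x s then 1 else 0)" unfolding ph_def by simp

lemma qry1: "qry_perm 1 x c = (if x ! (c div 2) then (if even c then c + 1 else c - 1) else c)"
proof -
  have "c div 2 * 2 + (1 - c mod 2) = (if even c then c + 1 else c - 1)" by presburger
  thus ?thesis unfolding qry_perm_def Let_def by auto
qed

lemma qry1': "qry_perm (Suc 0) x c = (if x ! (c div 2) then (if even c then c + 1 else c - 1) else c)"
  using qry1 by simp

definition DD :: "nat \<Rightarrow> bool list \<Rightarrow> complex vec \<Rightarrow> complex vec" where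
  "DD n x w = Gm (qdim n 1) *\<^sub>v (query_op n 1 x *\<^sub>v (Gm (qdim n 1) *\<^sub>v w))"

lemma even_qdim: "even (qdim n 1)" unfolding qdim_def by simp

lemma DD_carrier: "DD n x w \<in> carrier_vec (qdim n 1)"
  unfolding DD_def by (intro carrier_vecI) (simp add: Gm_def)

lemma D_apply:
  assumes w: "w \<in> carrier_vec (qdim n 1)" and r: "r < qdim n 1"
  shows "DD n x w $ r = (if odd r \<and> x ! (r div 2) then - w $ r else w $ r)"
proof -
  let ?d = "qdim n 1"
  define i where "i = r div 2"
  have d: "even ?d" by (rule even_qdim)
  have a: "2 * i < ?d" using r unfolding i_def by linarith
  have b: "2 * i + 1 < ?d" using r d unfolding i_def by presburger
  define u where "u = Gm ?d *\<^sub>v w"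
  define q where "q = query_op n 1 x *\<^sub>v u"
  have u: "u \<in> carrier_vec ?d" unfolding u_def by (intro carrier_vecI) (simp add: Gm_def)
  have qc: "q \<in> carrier_vec ?d" unfolding q_def by (intro carrier_vecI) (simp add: query_op_def)
  have u0: "u $ (2 * i) = hh * w $ (2 * i) + hh * w $ (2 * i + 1)"
    unfolding u_def using Gm_apply[OF d w a] by simp
  have u1: "u $ (2 * i + 1) = hh * w $ (2 * i) - hh * w $ (2 * i + 1)"
    unfolding u_def using Gm_apply[OF d w b] by simp
  have q0: "q $ (2 * i) = (if x ! i then u $ (2 * i + 1) else u $ (2 * i))"
    unfolding q_def using query_apply[of 1 "2 * i" n u x] a u by (simp add: qry1 qry1')
  have q1: "q $ (2 * i + 1) = (if x ! i then u $ (2 * i) else u $ (2 * i + 1))"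
    unfolding q_def using query_apply[of 1 "2 * i + 1" n u x] b u by (simp add: qry1 qry1')
  have res: "DD n x w $ r = hh * q $ (2 * i) + (if odd r then -hh else hh) * q $ (2 * i + 1)"
    unfolding DD_def q_def u_def using Gm_apply[OF d qc[unfolded q_def u_def] r] unfolding i_def by simp
  have ro: "odd r \<Longrightarrow> r = 2 * i + 1" "\<not> odd r \<Longrightarrow> r = 2 * i" unfolding i_def by presburger+
  have k1: "hh * (hh * w $ (2 * i) - hh * w $ (2 * i + 1)) + hh * (hh * w $ (2 * i) + hh * w $ (2 * i + 1)) = 2 * (hh * hh) * w $ (2 * i)"
    by (simp add: algebra_simps)
  have k2: "hh * (hh * w $ (2 * i) - hh * w $ (2 * i + 1)) - hh * (hh * w $ (2 * i) + hh * w $ (2 * i + 1)) = - (2 * (hh * hh) * w $ (2 * i + 1))"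
    by (simp add: algebra_simps)
  have k3: "hh * (hh * w $ (2 * i) + hh * w $ (2 * i + 1)) + hh * (hh * w $ (2 * i) - hh * w $ (2 * i + 1)) = 2 * (hh * hh) * w $ (2 * i)"
    by (simp add: algebra_simps)
  have k4: "hh * (hh * w $ (2 * i) + hh * w $ (2 * i + 1)) - hh * (hh * w $ (2 * i) - hh * w $ (2 * i + 1)) = 2 * (hh * hh) * w $ (2 * i + 1)"
    by (simp add: algebra_simps)
  show ?thesis
  proof (cases "odd r")
    case True
    then show ?thesis unfolding res q0 q1 u0 u1 using ro(1)[OF True] k2 k4 hh_sq
      by (cases "x ! i") (auto simp: i_def[symmetric] algebra_simps)
  next
    case False
    then show ?thesis unfolding res q0 q1 u0 u1 using ro(2)[OF False] k1 k3 hh_sq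
      by (cases "x ! i") (auto simp: i_def[symmetric] algebra_simps)
  qed
qed

definition st :: "nat \<Rightarrow> nat \<Rightarrow> complex \<Rightarrow> nat \<Rightarrow> complex vec" where
  "st n k \<sigma> c = vec (qdim n 1) (\<lambda>r. if r = pa n k then \<sigma> * hh else if r = pb n k then \<sigma> * (-1) ^ c * hh else 0)"

lemma st_carrier: "st n k \<sigma> c \<in> carrier_vec (qdim n 1)" unfolding st_def by simp

lemma pab:
  assumes "k < mq n"
  shows "pa n k < qdim n 1" "pb n k < qdim n 1" "pa n k \<noteq> pb n k"
  unfolding pa_def pb_def
    apply (rule ps_lt, use assms in simp)
   apply (rule ps_lt, use assms in simp)
  apply (rule ps_inj, use assms in simp_all)
  done

lemma ph_sq: "ph n x s * ph n x s = 1" unfolding ph_def by simp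

lemma DS_apply:
  assumes k: "k < mq n" and r: "r < qdim n 1"
  shows "DD n x (st n k \<sigma> c) $ r = (if r = pa n k then \<sigma> * ph n x (2 * k) * hh
      else if r = pb n k then \<sigma> * (-1) ^ c * ph n x (2 * k + 1) * hh else 0)"
proof -
  have ba: "(odd (pa n k) \<and> x ! (pa n k div 2)) = qbit n x (2 * k)"
    unfolding pa_def by (rule ps_bit) (use k in simp)
  have bb: "(odd (pb n k) \<and> x ! (pb n k div 2)) = qbit n x (2 * k + 1)"
    unfolding pb_def by (rule ps_bit) (use k in simp)
  show ?thesis unfolding D_apply[OF st_carrier r] using r pab[OF k] ba bb
    by (auto simp: st_def ph_def)
qed

definition tau :: "nat \<Rightarrow> nat \<Rightarrow> nat \<Rightarrow> nat" where
  "tau n k r = (if r = pa n k then pa n (Suc k) else if r = pa n (Suc k) then pa n k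
     else if r = pb n k then pb n (Suc k) else if r = pb n (Suc k) then pb n k else r)"

lemma four_distinct:
  assumes "Suc k < mq n"
  shows "pa n k \<noteq> pb n k" "pa n k \<noteq> pa n (Suc k)" "pa n k \<noteq> pb n (Suc k)"
    "pb n k \<noteq> pa n (Suc k)" "pb n k \<noteq> pb n (Suc k)" "pa n (Suc k) \<noteq> pb n (Suc k)"
  unfolding pa_def pb_def by (rule ps_inj, use assms in simp_all)+

lemma tau_invol:
  assumes k: "Suc k < mq n"
  shows "invol (tau n k) (qdim n 1)"
  unfolding invol_def tau_def using four_distinct[OF k] pab[of k n] pab[of "Suc k" n] k
  by auto

lemma sign_step:
  assumes k: "k < mq n" and x: "length x = n"
  shows "(-1 :: complex) ^ ck n x (Suc k) = (-1) ^ ck n x k * ph n x (2 * k) * ph n x (2 * k + 1)"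
  unfolding ck_step[OF k x] power_add ph_pow ..

lemma step_vec:
  assumes k: "Suc k < mq n" and x: "length x = n"
  shows "Pm (tau n k) (qdim n 1) *\<^sub>v DD n x (st n k \<sigma> (ck n x k)) = st n (Suc k) (\<sigma> * ph n x (2 * k)) (ck n x (Suc k))"
proof (rule eq_vecI)
  show "dim_vec (Pm (tau n k) (qdim n 1) *\<^sub>v DD n x (st n k \<sigma> (ck n x k))) = dim_vec (st n (Suc k) (\<sigma> * ph n x (2 * k)) (ck n x (Suc k)))"
    by (simp add: Pm_def st_def)
  fix r assume "r < dim_vec (st n (Suc k) (\<sigma> * ph n x (2 * k)) (ck n x (Suc k)))"
  hence r: "r < qdim n 1" by (simp add: st_def)
  have k0: "k < mq n" using k by simp
  have inv: "invol (tau n k) (qdim n 1)" by (rule tau_invol[OF k])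
  have tr: "tau n k r < qdim n 1" using inv r unfolding invol_def by auto
  have lhs: "(Pm (tau n k) (qdim n 1) *\<^sub>v DD n x (st n k \<sigma> (ck n x k))) $ r = DD n x (st n k \<sigma> (ck n x k)) $ (tau n k r)"
    by (rule Pm_apply[OF inv DD_carrier r])
  note dist = four_distinct[OF k]
  note sg = sign_step[OF k0 x]
  have sq: "ph n x (2 * k) * ph n x (2 * k) = 1" by (rule ph_sq)
  have key: "\<sigma> * (-1) ^ ck n x k * ph n x (2 * k + 1) = \<sigma> * ph n x (2 * k) * (-1) ^ ck n x (Suc k)"
    unfolding sg using sq by (simp add: algebra_simps)
  show "(Pm (tau n k) (qdim n 1) *\<^sub>v DD n x (st n k \<sigma> (ck n x k))) $ r = st n (Suc k) (\<sigma> * ph n x (2 * k)) (ck n x (Suc k)) $ r"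
    unfolding lhs DS_apply[OF k0 tr] using r dist key
    by (auto simp: st_def tau_def)
qed


definition sw0 :: "nat \<Rightarrow> nat \<Rightarrow> nat" where
  "sw0 n r = (if r = 0 then pa n 0 else if r = pa n 0 then 0 else r)"

definition U0q :: "nat \<Rightarrow> complex mat" where
  "U0q n = Gm (qdim n 1) * (Hm (pa n 0) (pb n 0) (qdim n 1) * Pm (sw0 n) (qdim n 1))"

definition Umid :: "nat \<Rightarrow> nat \<Rightarrow> complex mat" where
  "Umid n k = Gm (qdim n 1) * (Pm (tau n k) (qdim n 1) * Gm (qdim n 1))"

definition Ufin :: "nat \<Rightarrow> complex mat" where
  "Ufin n = Hm (pa n (mq n - 1)) (pb n (mq n - 1)) (qdim n 1) * Gm (qdim n 1)"

definition Usq :: "nat \<Rightarrow> complex mat list" where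
  "Usq n = map (Umid n) [0..<mq n - 1] @ [Ufin n]"

lemma qdim_pos: "n \<ge> 1 \<Longrightarrow> 0 < qdim n 1" unfolding qdim_def by simp

lemma sw0_invol: "n \<ge> 1 \<Longrightarrow> invol (sw0 n) (qdim n 1)"
  unfolding invol_def sw0_def using pab(1)[of 0 n] mq_pos[of n] qdim_pos[of n] by auto

lemma init_vec:
  assumes n: "n \<ge> 1"
  shows "U0q n *\<^sub>v unit_vec (qdim n 1) 0 = Gm (qdim n 1) *\<^sub>v st n 0 1 0"
proof -
  let ?d = "qdim n 1"
  have k0: "0 < mq n" using mq_pos[OF n] by simp
  note ab = pab[OF k0]
  have P: "Pm (sw0 n) ?d *\<^sub>v unit_vec ?d 0 = unit_vec ?d (pa n 0)"
  proof (rule eq_vecI)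
    fix r assume "r < dim_vec (unit_vec ?d (pa n 0))"
    hence r: "r < ?d" by simp
    have "sw0 n r < ?d" using sw0_invol[OF n] r unfolding invol_def by auto
    thus "(Pm (sw0 n) ?d *\<^sub>v unit_vec ?d 0) $ r = unit_vec ?d (pa n 0) $ r"
      unfolding Pm_apply[OF sw0_invol[OF n] unit_vec_carrier r] using r ab(1) qdim_pos[OF n]
      by (auto simp: sw0_def)
  qed (simp add: Pm_def)
  have H: "Hm (pa n 0) (pb n 0) ?d *\<^sub>v unit_vec ?d (pa n 0) = st n 0 1 0"
  proof (rule eq_vecI)
    fix r assume "r < dim_vec (st n 0 1 0)"
    hence r: "r < ?d" by (simp add: st_def)
    show "(Hm (pa n 0) (pb n 0) ?d *\<^sub>v unit_vec ?d (pa n 0)) $ r = st n 0 1 0 $ r"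
      unfolding Hm_apply[OF ab unit_vec_carrier r] using r ab by (auto simp: st_def)
  qed (simp add: Hm_def st_def)
  have "U0q n *\<^sub>v unit_vec ?d 0 = Gm ?d *\<^sub>v ((Hm (pa n 0) (pb n 0) ?d * Pm (sw0 n) ?d) *\<^sub>v unit_vec ?d 0)"
    unfolding U0q_def by (rule assoc_mult_mat_vec[OF Gm_carrier mult_carrier_mat[OF Hm_carrier Pm_carrier] unit_vec_carrier])
  also have "(Hm (pa n 0) (pb n 0) ?d * Pm (sw0 n) ?d) *\<^sub>v unit_vec ?d 0 = Hm (pa n 0) (pb n 0) ?d *\<^sub>v (Pm (sw0 n) ?d *\<^sub>v unit_vec ?d 0)"
    by (rule assoc_mult_mat_vec[OF Hm_carrier Pm_carrier unit_vec_carrier])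
  finally have "U0q n *\<^sub>v unit_vec ?d 0 = Gm ?d *\<^sub>v (Hm (pa n 0) (pb n 0) ?d *\<^sub>v (Pm (sw0 n) ?d *\<^sub>v unit_vec ?d 0))" .
  thus ?thesis unfolding P H .
qed

lemma Umid_apply:
  assumes y: "y \<in> carrier_vec (qdim n 1)"
  shows "Umid n k *\<^sub>v y = Gm (qdim n 1) *\<^sub>v (Pm (tau n k) (qdim n 1) *\<^sub>v (Gm (qdim n 1) *\<^sub>v y))"
proof -
  let ?d = "qdim n 1"
  have "Umid n k *\<^sub>v y = Gm ?d *\<^sub>v ((Pm (tau n k) ?d * Gm ?d) *\<^sub>v y)"
    unfolding Umid_def by (rule assoc_mult_mat_vec[OF Gm_carrier mult_carrier_mat[OF Pm_carrier Gm_carrier] y])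
  also have "(Pm (tau n k) ?d * Gm ?d) *\<^sub>v y = Pm (tau n k) ?d *\<^sub>v (Gm ?d *\<^sub>v y)"
    by (rule assoc_mult_mat_vec[OF Pm_carrier Gm_carrier y])
  finally show ?thesis .
qed

lemma Ufin_apply:
  assumes y: "y \<in> carrier_vec (qdim n 1)"
  shows "Ufin n *\<^sub>v y = Hm (pa n (mq n - 1)) (pb n (mq n - 1)) (qdim n 1) *\<^sub>v (Gm (qdim n 1) *\<^sub>v y)"
  unfolding Ufin_def by (rule assoc_mult_mat_vec[of _ "qdim n 1" "qdim n 1" _ "qdim n 1"]) (use y in auto)

lemma Q_carrier: "y \<in> carrier_vec (qdim n 1) \<Longrightarrow> query_op n 1 x *\<^sub>v y \<in> carrier_vec (qdim n 1)"
  by (intro carrier_vecI) (simp add: query_op_def)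

lemma G_carrier: "Gm d *\<^sub>v y \<in> carrier_vec d"
  by (intro carrier_vecI) (simp add: Gm_def)

lemma run_lemma:
  assumes x: "length x = n"
  shows "k < mq n \<Longrightarrow> (\<sigma> = 1 \<or> \<sigma> = -1) \<Longrightarrow> \<exists>\<sigma>'. (\<sigma>' = 1 \<or> \<sigma>' = -1) \<and>
     q_run (query_op n 1 x) (map (Umid n) [k..<mq n - 1] @ [Ufin n]) (Gm (qdim n 1) *\<^sub>v st n k \<sigma> (ck n x k))
     = Hm (pa n (mq n - 1)) (pb n (mq n - 1)) (qdim n 1) *\<^sub>v DD n x (st n (mq n - 1) \<sigma>' (ck n x (mq n - 1)))"
proof (induction "mq n - 1 - k" arbitrary: k \<sigma>)
  case 0
  hence k: "k = mq n - 1" by simp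
  have "q_run (query_op n 1 x) (map (Umid n) [k..<mq n - 1] @ [Ufin n]) (Gm (qdim n 1) *\<^sub>v st n k \<sigma> (ck n x k))
     = Ufin n *\<^sub>v (query_op n 1 x *\<^sub>v (Gm (qdim n 1) *\<^sub>v st n k \<sigma> (ck n x k)))"
    using k by simp
  also have "\<dots> = Hm (pa n (mq n - 1)) (pb n (mq n - 1)) (qdim n 1) *\<^sub>v DD n x (st n k \<sigma> (ck n x k))"
    unfolding DD_def by (rule Ufin_apply[OF Q_carrier[OF G_carrier]])
  finally show ?case using 0 k by blast
next
  case (Suc j)
  hence k: "Suc k < mq n" by simp
  have l: "[k..<mq n - 1] = k # [Suc k..<mq n - 1]" using k by (simp add: upt_conv_Cons)
  have ph1: "ph n x (2 * k) = 1 \<or> ph n x (2 * k) = -1" unfolding ph_def by simp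
  have s': "\<sigma> * ph n x (2 * k) = 1 \<or> \<sigma> * ph n x (2 * k) = -1" using Suc.prems(2) ph1 by auto
  have "q_run (query_op n 1 x) (map (Umid n) [k..<mq n - 1] @ [Ufin n]) (Gm (qdim n 1) *\<^sub>v st n k \<sigma> (ck n x k))
     = q_run (query_op n 1 x) (map (Umid n) [Suc k..<mq n - 1] @ [Ufin n])
         (Umid n k *\<^sub>v (query_op n 1 x *\<^sub>v (Gm (qdim n 1) *\<^sub>v st n k \<sigma> (ck n x k))))"
    unfolding l by simp
  also have "Umid n k *\<^sub>v (query_op n 1 x *\<^sub>v (Gm (qdim n 1) *\<^sub>v st n k \<sigma> (ck n x k)))
      = Gm (qdim n 1) *\<^sub>v (Pm (tau n k) (qdim n 1) *\<^sub>v DD n x (st n k \<sigma> (ck n x k)))"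
    unfolding DD_def by (rule Umid_apply[OF Q_carrier[OF G_carrier]])
  also have "\<dots> = Gm (qdim n 1) *\<^sub>v st n (Suc k) (\<sigma> * ph n x (2 * k)) (ck n x (Suc k))"
    unfolding step_vec[OF k x] ..
  finally show ?case using Suc.hyps(1)[of "Suc k" "\<sigma> * ph n x (2 * k)"] Suc.hyps(2) k s' by auto
qed

lemma final_entry:
  assumes n: "n \<ge> 1" and x: "length x = n" and sg: "\<sigma> = 1 \<or> \<sigma> = -1"
  shows "(cmod ((Hm (pa n (mq n - 1)) (pb n (mq n - 1)) (qdim n 1) *\<^sub>v
            DD n x (st n (mq n - 1) \<sigma> (ck n x (mq n - 1)))) $ pb n (mq n - 1)))\<^sup>2
         = (if odd (cnt x) then 1 else 0)"
proof -
  define K where "K = mq n - 1"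
  have K: "K < mq n" and SK: "Suc K = mq n" unfolding K_def using mq_pos[OF n] by auto
  note ab = pab[OF K]
  define fa where "fa = ph n x (2 * K)"
  define fb where "fb = ph n x (2 * K + 1)"
  define c where "c = ck n x K"
  define E where "E = (-1 :: complex) ^ cnt x"
  have sE: "E = (-1) ^ c * fa * fb" unfolding E_def c_def fa_def fb_def
    using sign_step[OF K x] unfolding SK ck_final[OF x] .
  have faq: "fa * fa = 1" unfolding fa_def by (rule ph_sq)
  have f1: "(-1) ^ c * fb = fa * E" unfolding sE using faq by (simp add: algebra_simps)
  have DA: "DD n x (st n K \<sigma> c) $ pa n K = \<sigma> * fa * hh"
    unfolding DS_apply[OF K ab(1)] fa_def by simp
  have DB: "DD n x (st n K \<sigma> c) $ pb n K = \<sigma> * (-1) ^ c * fb * hh"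
    unfolding DS_apply[OF K ab(2)] fb_def using ab(3) by simp
  have "(Hm (pa n K) (pb n K) (qdim n 1) *\<^sub>v DD n x (st n K \<sigma> c)) $ pb n K
        = hh * (\<sigma> * fa * hh) - hh * (\<sigma> * (-1) ^ c * fb * hh)"
    unfolding Hm_apply[OF ab DD_carrier ab(2)] DA DB using ab(3) by simp
  also have "\<dots> = (hh * hh) * \<sigma> * fa * (1 - E)"
  proof -
    have e1: "hh * (\<sigma> * fa * hh) = (hh * hh) * \<sigma> * fa" by (simp add: algebra_simps)
    have e2: "hh * (\<sigma> * (-1) ^ c * fb * hh) = (hh * hh) * \<sigma> * ((-1) ^ c * fb)" by (simp add: algebra_simps)
    show ?thesis unfolding e1 e2 f1 by (simp add: algebra_simps)
  qed
  finally have v: "(Hm (pa n K) (pb n K) (qdim n 1) *\<^sub>v DD n x (st n K \<sigma> c)) $ pb n K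
        = \<sigma> * fa * ((1 - E) / 2)" using hh_sq by simp
  have sf: "cmod (\<sigma> * fa) = 1" using sg unfolding fa_def ph_def by auto
  have "cmod ((1 - E) / 2) = (if odd (cnt x) then 1 else 0)" unfolding E_def by auto
  hence "cmod (\<sigma> * fa * ((1 - E) / 2)) = (if odd (cnt x) then 1 else 0)"
    using sf by (simp add: norm_mult)
  hence cm: "cmod ((Hm (pa n K) (pb n K) (qdim n 1) *\<^sub>v DD n x (st n K \<sigma> c)) $ pb n K) = (if odd (cnt x) then 1 else 0)"
    unfolding v .
  show ?thesis unfolding K_def[symmetric] c_def[symmetric] cm by simp
qed

lemma alg_ok:
  assumes n: "n \<ge> 1"
  shows "quantum_alg n (mq n) 1 (U0q n) (Usq n)"
proof -
  let ?d = "qdim n 1"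
  have k0: "0 < mq n" using mq_pos[OF n] by simp
  have G: "unitary_mat ?d (Gm ?d)" by (rule Gm_unitary[OF even_qdim])
  have "unitary_mat ?d (U0q n)" unfolding U0q_def
    by (intro unitary_mult G Hm_unitary pab[OF k0] Pm_unitary sw0_invol[OF n])
  moreover have "unitary_mat ?d (Umid n k)" if "k < mq n - 1" for k
    unfolding Umid_def using that by (intro unitary_mult G Pm_unitary tau_invol) auto
  moreover have "unitary_mat ?d (Ufin n)" unfolding Ufin_def
    using k0 by (intro unitary_mult G Hm_unitary pab) auto
  moreover have "length (Usq n) = mq n" unfolding Usq_def using k0 by simp
  ultimately show ?thesis unfolding quantum_alg_def Usq_def by auto
qed

lemma prob_ok:
  assumes n: "n \<ge> 1" and x: "x \<in> inputs n"
  shows "q_prob1 n 1 (U0q n) (Usq n) {pb n (mq n - 1)} x = (if parity x then 1 else 0)"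
proof -
  have len: "length x = n" using x unfolding inputs_def by simp
  have k0: "0 < mq n" using mq_pos[OF n] by simp
  have Bd: "pb n (mq n - 1) < qdim n 1" using pab(2)[of "mq n - 1" n] k0 by simp
  obtain \<sigma>' where s': "\<sigma>' = 1 \<or> \<sigma>' = -1" and
    r: "q_run (query_op n 1 x) (map (Umid n) [0..<mq n - 1] @ [Ufin n]) (Gm (qdim n 1) *\<^sub>v st n 0 1 (ck n x 0))
     = Hm (pa n (mq n - 1)) (pb n (mq n - 1)) (qdim n 1) *\<^sub>v DD n x (st n (mq n - 1) \<sigma>' (ck n x (mq n - 1)))"
    using run_lemma[OF len k0, of 1] by auto
  have qf: "q_final n 1 (U0q n) (Usq n) x = Hm (pa n (mq n - 1)) (pb n (mq n - 1)) (qdim n 1) *\<^sub>v DD n x (st n (mq n - 1) \<sigma>' (ck n x (mq n - 1)))"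
    unfolding q_final_def init_vec[OF n] Usq_def using r unfolding ck_0 .
  have "{pb n (mq n - 1)} \<inter> {..<qdim n 1} = {pb n (mq n - 1)}" using Bd by auto
  thus ?thesis unfolding q_prob1_def qf using final_entry[OF n len s'] parity_cnt by simp
qed

lemma succ_ok:
  assumes n: "n \<ge> 1" and x: "x \<in> inputs n"
  shows "quantum_succ n 1 (U0q n) (Usq n) {pb n (mq n - 1)} parity x = 1"
  unfolding quantum_succ_def prob_ok[OF n x] by simp


lemma mq_ceil: "int (mq n) = \<lceil>real n / 2\<rceil>"
proof -
  have "\<lceil>real n / 2\<rceil> = int ((n + 1) div 2)"
  proof (rule ceiling_unique)
    show "real_of_int (int ((n + 1) div 2)) - 1 < real n / 2"
      by (cases "even n") (auto elim!: evenE oddE simp: field_simps)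
    show "real n / 2 \<le> real_of_int (int ((n + 1) div 2))"
      by (cases "even n") (auto elim!: evenE oddE simp: field_simps)
  qed
  thus ?thesis unfolding mq_def by simp
qed

lemma UQ_parity:
  assumes n: "n \<ge> 1"
  shows "UQ n parity = mq n"
  unfolding UQ_def
proof (rule Least_equality)
  show "\<exists>W U0 Us Acc. quantum_alg n (mq n) W U0 Us \<and> (\<forall>x\<in>inputs n. 1/2 < quantum_succ n W U0 Us Acc parity x)"
  proof (rule exI[of _ 1], rule exI[of _ "U0q n"], rule exI[of _ "Usq n"], rule exI[of _ "{pb n (mq n - 1)}"])
    show "quantum_alg n (mq n) 1 (U0q n) (Usq n) \<and> (\<forall>x\<in>inputs n. 1/2 < quantum_succ n 1 (U0q n) (Usq n) {pb n (mq n - 1)} parity x)"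
      using alg_ok[OF n] succ_ok[OF n] by auto
  qed
next
  fix T assume "\<exists>W U0 Us Acc. quantum_alg n T W U0 Us \<and> (\<forall>x\<in>inputs n. 1/2 < quantum_succ n W U0 Us Acc parity x)"
  then obtain W U0 Us Acc where "quantum_alg n T W U0 Us" "\<forall>x\<in>inputs n. 1/2 < quantum_succ n W U0 Us Acc parity x"
    by blast
  hence "n \<le> T + T" by (intro quantum_low) auto
  thus "mq n \<le> T" unfolding mq_def by linarith
qed

lemma q_prob1_nonneg: "0 \<le> q_prob1 n W U0 Us Acc x"
  unfolding q_prob1_def by (intro sum_nonneg) auto

lemma WUQ_parity:
  assumes n: "n \<ge> 1"
  shows "WUQ n parity = real (mq n)"
  unfolding WUQ_def
proof (rule cInf_eq_minimum)
  have b: "quantum_bias n 1 (U0q n) (Usq n) {pb n (mq n - 1)} parity = 1/2"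
    unfolding quantum_bias_def
    using Min_const_img[OF finite_inputs inputs_ne, where f="\<lambda>x. quantum_succ n 1 (U0q n) (Usq n) {pb n (mq n - 1)} parity x" and c=1]
      succ_ok[OF n] by simp
  show "real (mq n) \<in> {real T + log 2 (1 / (2 * quantum_bias n W U0 Us Acc parity)) |T W U0 Us Acc.
                   quantum_alg n T W U0 Us \<and> 0 < quantum_bias n W U0 Us Acc parity}"
  proof (rule CollectI, rule exI[of _ "mq n"], rule exI[of _ 1], rule exI[of _ "U0q n"], rule exI[of _ "Usq n"], rule exI[of _ "{pb n (mq n - 1)}"])
    show "real (mq n) = real (mq n) + log 2 (1 / (2 * quantum_bias n 1 (U0q n) (Usq n) {pb n (mq n - 1)} parity)) \<and>
      quantum_alg n (mq n) 1 (U0q n) (Usq n) \<and> 0 < quantum_bias n 1 (U0q n) (Usq n) {pb n (mq n - 1)} parity"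
      using alg_ok[OF n] unfolding b by simp
  qed
next
  fix y assume "y \<in> {real T + log 2 (1 / (2 * quantum_bias n W U0 Us Acc parity)) |T W U0 Us Acc.
                   quantum_alg n T W U0 Us \<and> 0 < quantum_bias n W U0 Us Acc parity}"
  then obtain T W U0 Us Acc where y: "y = real T + log 2 (1 / (2 * quantum_bias n W U0 Us Acc parity))"
    and alg: "quantum_alg n T W U0 Us" and pos: "0 < quantum_bias n W U0 Us Acc parity" by blast
  have all: "\<forall>x\<in>inputs n. quantum_succ n W U0 Us Acc parity x > 1/2"
    using bias_pos[OF finite_inputs] pos unfolding quantum_bias_def by blast
  have "n \<le> T + T" by (rule quantum_low[OF alg all])
  hence "mq n \<le> T" unfolding mq_def by linarith
  moreover have "quantum_bias n W U0 Us Acc parity \<le> 1/2"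
    unfolding quantum_bias_def
  proof (rule bias_le[OF finite_inputs replicate_inputs])
    have "\<not> parity (replicate n False)" unfolding parity_def by simp
    thus "quantum_succ n W U0 Us Acc parity (replicate n False) \<le> 1"
      unfolding quantum_succ_def using q_prob1_nonneg[of n W U0 Us Acc "replicate n False"] by simp
  qed
  ultimately show "real (mq n) \<le> y" using y log_nonneg_bias[OF pos] by simp
qed

theorem mainTheorem10:
  fixes n :: nat
  assumes "n \<ge> 1"
  shows "UC n parity = n \<and> WUC n parity = real n \<and>
         int (UQ n parity) = \<lceil>real n / 2\<rceil> \<and> WUQ n parity = of_int \<lceil>real n / 2\<rceil>"
proof -
  have "WUQ n parity = of_int (int (mq n))" using WUQ_parity[OF assms] by simp
  thus ?thesis using UC_parity WUC_parity UQ_parity[OF assms] mq_ceil by simp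
qed


end
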